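(* For every $n\ge1$, the formula $\Phi_n$ separates $\mathcal{A}$ from $\mathcal{B}$, i.e. every trace in $\mathcal A$ satisfies $\Phi_n$ and no trace in $\mathcal B$ satisfies $\Phi_n$.
   Context: Fix $n\ge1$, atomic propositions $AP=\{\tilde p,\tilde q\}\cup P\cup Q$ with $P=\{p_1,\dots,p_n\}$, $Q=\{q_1,\dots,q_n\}$ (all distinct), $\Sigma=2^{AP}$. Formulae use literals, $\land,\lor$, $\mathsf F$ and $\mathsf O$, interpreted on finite non-empty traces $\sigma\in\Sigma^+$ at positions $0\le i<|\sigma|$: $\mathsf F\phi$ holds at $i$ iff $\phi$ holds at some $j$ with $i\le j<|\sigma|$; $\mathsf O\phi$ holds at $i$ iff $\phi$ holds at some $0\le j\le i$; $\sigma$ satisfies $\phi$ iff $\phi$ holds at position $0$. $\Phi_n := \mathsf{F}\big(\tilde q\land\bigwedge_{i=1}^n\big((q_i\land\mathsf{O}(\tilde p\land p_i))\lor(\neg q_i\land\mathsf{O}(\tilde p\land\neg p_i))\big)\big)$. Let $\alpha(n)=2^{n+1}(n+2)^2$. Let $T_P=\{\tau\in\Sigma:\tilde p\in\tau,\ \tau\subseteq P\cup\{\tilde p\}\}$ and $T_Q=\{\tau\in\Sigma:\tilde q\in\tau,\ \tau\subseteq Q\cup\{\tilde q\}\}$; for $\tau\in T_Q$ let $\overline\tau\in T_P$ be the letter with $p_i\in\overline\tau$ iff $q_i\in\tau$ for all $i$. Fix an arbitrary strict total order $\prec$ on $T_Q$, and let $\mathrm{Enum}$ be the unique word in $(\emptyset^{\alpha(n)}\cdot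 T_Q)^{2^n}\cdot\emptyset^{\alpha(n)}$ (here $\emptyset$ denotes the letter with no propositions) that lists every element of $T_Q$ exactly once in increasing $\prec$-order. For $\tau\in T_Q$, $\mathrm{Enum}_{-\tau}$ is obtained from $\mathrm{Enum}$ by deleting the unique position of letter $\tau$ together with the $\alpha(n)$ positions of letter $\emptyset$ immediately preceding it. Define $\mathcal A=\{\emptyset^j\cdot\overline\tau\cdot\mathrm{Enum}: j\in\mathbb N,\tau\in T_Q\}$ and $\mathcal B=\{\emptyset^j\cdot\overline\tau\cdot\mathrm{Enum}_{-\tau}: j\in\mathbb N,\tau\in T_Q\}$. *)

theory Defs
  imports Main
begin

(* Atomic propositions: Pt = p~, Qt = q~, P i = p_i, Q i = q_i (indices 1..n are used). *)
datatype atom = Pt | Qt | P nat | Q nat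

type_synonym letter = "atom set"
type_synonym trace = "letter list"

datatype fml = Pos atom | Neg atom | And fml fml | Or fml fml | Fut fml | Once fml

(* Semantics on finite traces at position i < length \<sigma>. *)
fun holds :: "trace \<Rightarrow> nat \<Rightarrow> fml \<Rightarrow> bool" where
  "holds \<sigma> i (Pos a) = (a \<in> \<sigma> ! i)"
| "holds \<sigma> i (Neg a) = (a \<notin> \<sigma> ! i)"
| "holds \<sigma> i (And \<phi> \<psi>) = (holds \<sigma> i \<phi> \<and> holds \<sigma> i \<psi>)"
| "holds \<sigma> i (Or \<phi> \<psi>) = (holds \<sigma> i \<phi> \<or> holds \<sigma> i \<psi>)"
| "holds \<sigma> i (Fut \<phi>) = (\<exists>j. i \<le> j \<and> j < length \<sigma> \<and> holds \<sigma> j \<phi>)"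
| "holds \<sigma> i (Once \<phi>) = (\<exists>j\<le>i. holds \<sigma> j \<phi>)"

definition models :: "trace \<Rightarrow> fml \<Rightarrow> bool" where
  "models \<sigma> \<phi> \<longleftrightarrow> \<sigma> \<noteq> [] \<and> holds \<sigma> 0 \<phi>"

fun conj_list :: "fml list \<Rightarrow> fml" where
  "conj_list [] = Pos Pt" (* never used: only applied to non-empty lists *)
| "conj_list [\<phi>] = \<phi>"
| "conj_list (\<phi> # \<psi> # \<phi>s) = And \<phi> (conj_list (\<psi> # \<phi>s))"

definition Phi :: "nat \<Rightarrow> fml" where
  "Phi n = Fut (And (Pos Qt)
     (conj_list (map (\<lambda>i. Or (And (Pos (Q i)) (Once (And (Pos Pt) (Pos (P i)))))
                              (And (Neg (Q i)) (Once (And (Pos Pt) (Neg (P i))))))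
                     [1..<n+1])))"

definition alpha :: "nat \<Rightarrow> nat" where
  "alpha n = 2 ^ (n + 1) * (n + 2) ^ 2"

definition T_P :: "nat \<Rightarrow> letter set" where
  "T_P n = {\<tau>. Pt \<in> \<tau> \<and> \<tau> \<subseteq> insert Pt (P ` {1..n})}"

definition T_Q :: "nat \<Rightarrow> letter set" where
  "T_Q n = {\<tau>. Qt \<in> \<tau> \<and> \<tau> \<subseteq> insert Qt (Q ` {1..n})}"

definition bar :: "nat \<Rightarrow> letter \<Rightarrow> letter" where
  "bar n \<tau> = insert Pt {P i | i. i \<in> {1..n} \<and> Q i \<in> \<tau>}"

definition strict_total_on :: "'a set \<Rightarrow> ('a \<Rightarrow> 'a \<Rightarrow> bool) \<Rightarrow> bool" where
  "strict_total_on S r \<longleftrightarrow>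
     (\<forall>x\<in>S. \<not> r x x) \<and>
     (\<forall>x\<in>S. \<forall>y\<in>S. \<forall>z\<in>S. r x y \<longrightarrow> r y z \<longrightarrow> r x z) \<and>
     (\<forall>x\<in>S. \<forall>y\<in>S. x \<noteq> y \<longrightarrow> r x y \<or> r y x)"

definition enum_list :: "nat \<Rightarrow> (letter \<Rightarrow> letter \<Rightarrow> bool) \<Rightarrow> letter list" where
  "enum_list n ord = (THE L. distinct L \<and> set L = T_Q n \<and> sorted_wrt ord L)"

definition blocks :: "nat \<Rightarrow> letter list \<Rightarrow> trace" where
  "blocks n L = concat (map (\<lambda>\<tau>. replicate (alpha n) {} @ [\<tau>]) L) @ replicate (alpha n) {}"

definition Enum :: "nat \<Rightarrow> (letter \<Rightarrow> letter \<Rightarrow> bool) \<Rightarrow> trace" where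
  "Enum n ord = blocks n (enum_list n ord)"

(* Enum with the letter \<tau> and the \<alpha>(n) empty letters immediately before it deleted. *)
definition Enum_minus :: "nat \<Rightarrow> (letter \<Rightarrow> letter \<Rightarrow> bool) \<Rightarrow> letter \<Rightarrow> trace" where
  "Enum_minus n ord \<tau> = blocks n (remove1 \<tau> (enum_list n ord))"

definition A_set :: "nat \<Rightarrow> (letter \<Rightarrow> letter \<Rightarrow> bool) \<Rightarrow> trace set" where
  "A_set n ord = {replicate j {} @ [bar n \<tau>] @ Enum n ord | j \<tau>. \<tau> \<in> T_Q n}"

definition B_set :: "nat \<Rightarrow> (letter \<Rightarrow> letter \<Rightarrow> bool) \<Rightarrow> trace set" where
  "B_set n ord = {replicate j {} @ [bar n \<tau>] @ Enum_minus n ord \<tau> | j \<tau>. \<tau> \<in> T_Q n}"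

end

theory Submission
  imports Defs
begin

lemma holds_conj_list:
  "xs \<noteq> [] \<Longrightarrow> holds \<sigma> k (conj_list xs) \<longleftrightarrow> (\<forall>\<phi>\<in>set xs. holds \<sigma> k \<phi>)"
  by (induction xs rule: conj_list.induct) auto

lemma sorted_insert_exists:
  assumes "distinct L" "sorted_wrt r L" "x \<notin> set L"
    and irr: "\<forall>y\<in>insert x (set L). \<not> r y y"
    and tr: "\<forall>a\<in>insert x (set L). \<forall>b\<in>insert x (set L). \<forall>c\<in>insert x (set L). r a b \<longrightarrow> r b c \<longrightarrow> r a c"
    and tot: "\<forall>a\<in>insert x (set L). \<forall>b\<in>insert x (set L). a \<noteq> b \<longrightarrow> r a b \<or> r b a"
  shows "\<exists>L'. distinct L' \<and> set L' = insert x (set L) \<and> sorted_wrt r L'"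
proof -
  let ?A = "filter (\<lambda>y. r y x) L" and ?B = "filter (\<lambda>y. r x y) L"
  let ?L = "?A @ x # ?B"
  have xi: "x \<in> insert x (set L)" by simp
  have dis: "\<And>y. y \<in> set L \<Longrightarrow> r y x \<Longrightarrow> r x y \<Longrightarrow> False"
  proof -
    fix y assume y: "y \<in> set L" "r y x" "r x y"
    have yi: "y \<in> insert x (set L)" using y(1) by simp
    have "r y y" using tr[rule_format, OF yi xi yi y(2) y(3)] .
    then show False using irr[rule_format, OF yi] by simp
  qed
  have d1: "distinct ?A" "distinct ?B" using assms(1) by simp_all
  have d2: "set ?A \<inter> set ?B = {}" using dis by auto
  have d3: "x \<notin> set ?A" "x \<notin> set ?B" using assms(3) by simp_all
  have D: "distinct ?L" using d1 d2 d3 by simp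
  have tt: "r y x \<or> r x y" if "y \<in> set L" for y
  proof -
    have "y \<noteq> x" using that assms(3) by auto
    moreover have "y \<in> insert x (set L)" using that by simp
    ultimately show ?thesis using tot[rule_format, OF _ xi] by blast
  qed
  have S: "set ?L = insert x (set L)"
  proof
    show "set ?L \<subseteq> insert x (set L)" by auto
    show "insert x (set L) \<subseteq> set ?L" using tt by auto
  qed
  have s1: "sorted_wrt r ?A" "sorted_wrt r ?B" using assms(2) by (simp_all add: sorted_wrt_filter)
  have s2: "\<forall>a\<in>set ?A. \<forall>b\<in>set ?B. r a b"
  proof (intro ballI)
    fix a b assume "a \<in> set ?A" "b \<in> set ?B"
    then have ab: "a \<in> insert x (set L)" "b \<in> insert x (set L)" "r a x" "r x b" by auto
    show "r a b" using tr[rule_format, OF ab(1) xi ab(2) ab(3) ab(4)] .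
  qed
  have s3: "\<forall>a\<in>set ?A. r a x" "\<forall>b\<in>set ?B. r x b" by auto
  have W1: "sorted_wrt r (x # ?B)"
    unfolding sorted_wrt.simps(2) using s1(2) s3(2) by blast
  have W2: "\<forall>a\<in>set ?A. \<forall>b\<in>set (x # ?B). r a b"
  proof (intro ballI)
    fix a b assume a: "a \<in> set ?A" and b: "b \<in> set (x # ?B)"
    show "r a b"
    proof (cases "b = x")
      case True
      have "r a x" using a s3(1) by blast
      then show ?thesis unfolding True .
    next
      case False then have "b \<in> set ?B" using b by simp
      then show ?thesis using a s2 by blast
    qed
  qed
  have W: "sorted_wrt r ?L"
    unfolding sorted_wrt_append using s1(1) W1 W2 by blast
  show ?thesis by (rule exI[of _ ?L]) (intro conjI D S W)
qed

lemma sorted_exists: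
  assumes "finite S" "strict_total_on S r"
  shows "\<exists>L. distinct L \<and> set L = S \<and> sorted_wrt r L"
  using assms
proof (induction S rule: finite_induct)
  case empty then show ?case by auto
next
  case (insert x F)
  have "strict_total_on F r" using insert.prems unfolding strict_total_on_def by blast
  then obtain L where L: "distinct L" "set L = F" "sorted_wrt r L" using insert.IH by blast
  have st: "strict_total_on (insert x F) r" by (rule insert.prems)
  have "\<exists>L'. distinct L' \<and> set L' = insert x (set L) \<and> sorted_wrt r L'"
  proof (rule sorted_insert_exists[OF L(1) L(3)])
    show "x \<notin> set L" using insert.hyps L(2) by simp
    show "\<forall>y\<in>insert x (set L). \<not> r y y"
      using st unfolding strict_total_on_def L(2) by blast
    show "\<forall>a\<in>insert x (set L). \<forall>b\<in>insert x (set L). \<forall>c\<in>insert x (set L). r a b \<longrightarrow> r b c \<longrightarrow> r a c"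
      using st unfolding strict_total_on_def L(2) by blast
    show "\<forall>a\<in>insert x (set L). \<forall>b\<in>insert x (set L). a \<noteq> b \<longrightarrow> r a b \<or> r b a"
      using st unfolding strict_total_on_def L(2) by blast
  qed
  then show ?case using L(2) by simp
qed

lemma strict_total_mono:
  assumes "S \<subseteq> T" "strict_total_on T r"
  shows "strict_total_on S r"
  using assms unfolding strict_total_on_def by (meson subsetD)

lemma sorted_unique:
  assumes "distinct L1" "sorted_wrt r L1" "distinct L2" "sorted_wrt r L2" "set L1 = set L2"
    and "strict_total_on (set L1) r"
  shows "L1 = L2"
  using assms
proof (induction L1 arbitrary: L2)
  case Nil then show ?case by simp
next
  case (Cons a L1)
  have st: "strict_total_on (set (a # L1)) r" by (rule Cons.prems(6))
  obtain b L2' where L2: "L2 = b # L2'" using Cons.prems(5) by (cases L2) auto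
  have ab: "a = b"
  proof (rule ccontr)
    assume ne: "a \<noteq> b"
    have b1: "b \<in> set (a # L1)" using Cons.prems(5) L2 by simp
    then have bL1: "b \<in> set L1" using ne by simp
    have a0: "a \<in> set (a # L1)" by simp
    then have a1: "a \<in> set (b # L2')" using Cons.prems(5) L2 by metis
    then have aL2: "a \<in> set L2'" using ne by simp
    have rab: "r a b" using Cons.prems(2) bL1 by simp
    have rba: "r b a" using Cons.prems(4) L2 aL2 by simp
    have aa: "a \<in> set (a # L1)" by simp
    have "r a a" using st unfolding strict_total_on_def using aa b1 rab rba by blast
    then show False using st aa unfolding strict_total_on_def by blast
  qed
  have d: "a \<notin> set L1" "b \<notin> set L2'" using Cons.prems(1,3) L2 by simp_all
  have "set L1 = set L2'"
  proof -
    have "set L1 = set (a # L1) - {a}" using d(1) by simp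
    also have "\<dots> = set (b # L2') - {b}" using Cons.prems(5) L2 ab by simp
    also have "\<dots> = set L2'" using d(2) by simp
    finally show ?thesis .
  qed
  moreover have "strict_total_on (set L1) r"
    using strict_total_mono[OF _ st] by (meson set_subset_Cons)
  moreover have "distinct L1" "sorted_wrt r L1" using Cons.prems(1,2) by simp_all
  moreover have "distinct L2'" "sorted_wrt r L2'" using Cons.prems(3,4) L2 by simp_all
  ultimately show ?case using Cons.IH[of L2'] L2 ab by simp
qed

lemma finite_TQ: "finite (T_Q n)"
proof -
  have "T_Q n \<subseteq> Pow (insert Qt (Q ` {1..n}))" unfolding T_Q_def by auto
  then show ?thesis by (rule finite_subset) auto
qed

lemma enum_props:
  assumes "strict_total_on (T_Q n) ord"
  shows "distinct (enum_list n ord) \<and> set (enum_list n ord) = T_Q n"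
proof -
  obtain L where L: "distinct L \<and> set L = T_Q n \<and> sorted_wrt ord L"
    using sorted_exists[OF finite_TQ assms] by blast
  have "\<exists>!L. distinct L \<and> set L = T_Q n \<and> sorted_wrt ord L"
  proof (rule ex1I[of _ L])
    show "distinct L \<and> set L = T_Q n \<and> sorted_wrt ord L" by (rule L)
    fix L2 assume "distinct L2 \<and> set L2 = T_Q n \<and> sorted_wrt ord L2"
    then show "L2 = L" using sorted_unique[of L2 ord L] L assms by auto
  qed
  from theI'[OF this] show ?thesis unfolding enum_list_def by blast
qed

lemma set_blocks: "set (blocks n M) \<subseteq> insert {} (set M)"
  unfolding blocks_def by auto

lemma sigma_nth:
  "k < j + 1 + length (blocks n M) \<Longrightarrow>
   (replicate j {} @ [bar n \<tau>] @ blocks n M) ! k =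
   (if k < j then {} else if k = j then bar n \<tau> else blocks n M ! (k - j - 1))"
  by (auto simp: nth_append)

lemma bar_mem:
  "Pt \<in> bar n \<tau>" "Qt \<notin> bar n \<tau>" "P i \<in> bar n \<tau> \<longleftrightarrow> i \<in> {1..n} \<and> Q i \<in> \<tau>"
  unfolding bar_def by auto

lemma key:
  assumes M: "set M \<subseteq> T_Q n" and tau: "\<tau> \<in> T_Q n" and n: "n \<ge> 1"
  shows "models (replicate j {} @ [bar n \<tau>] @ blocks n M) (Phi n) \<longleftrightarrow> \<tau> \<in> set M"
proof -
  define \<sigma> where "\<sigma> = replicate j {} @ [bar n \<tau>] @ blocks n M"
  have len: "length \<sigma> = j + 1 + length (blocks n M)" unfolding \<sigma>_def by simp
  have nth: "\<And>k. k < length \<sigma> \<Longrightarrow> \<sigma> ! k =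
     (if k < j then {} else if k = j then bar n \<tau> else blocks n M ! (k - j - 1))"
    unfolding \<sigma>_def using sigma_nth len \<sigma>_def by simp
  have TQ_nPt: "\<And>x. x \<in> T_Q n \<Longrightarrow> Pt \<notin> x" unfolding T_Q_def by auto
  have bl: "\<And>k. k < length \<sigma> \<Longrightarrow> j < k \<Longrightarrow> blocks n M ! (k - j - 1) \<in> insert {} (set M)"
  proof -
    fix k assume "k < length \<sigma>" "j < k"
    then have "k - j - 1 < length (blocks n M)" using len by linarith
    then show "blocks n M ! (k - j - 1) \<in> insert {} (set M)"
      using set_blocks nth_mem by blast
  qed
  have c: "\<And>k. k < length \<sigma> \<Longrightarrow> Pt \<in> \<sigma> ! k \<Longrightarrow> k = j"
  proof -
    fix k assume k: "k < length \<sigma>" "Pt \<in> \<sigma> ! k"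
    show "k = j"
    proof (rule ccontr)
      assume "k \<noteq> j"
      then show False using k nth[OF k(1)] bl[OF k(1)] M TQ_nPt
        by (auto split: if_splits)
    qed
  qed
  have d: "\<And>k. k < length \<sigma> \<Longrightarrow> Qt \<in> \<sigma> ! k \<Longrightarrow> \<sigma> ! k \<in> set M \<and> j < k"
  proof -
    fix k assume k: "k < length \<sigma>" "Qt \<in> \<sigma> ! k"
    then show "\<sigma> ! k \<in> set M \<and> j < k" using nth[OF k(1)] bl[OF k(1)] bar_mem(2)[of n \<tau>]
      by (auto split: if_splits)
  qed
  have sj: "\<sigma> ! j = bar n \<tau>" "j < length \<sigma>" using nth len by auto
  define D where "D = (\<lambda>i. Or (And (Pos (Q i)) (Once (And (Pos Pt) (Pos (P i)))))
                              (And (Neg (Q i)) (Once (And (Pos Pt) (Neg (P i))))))"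
  have f: "\<And>k i. k < length \<sigma> \<Longrightarrow> j \<le> k \<Longrightarrow> i \<in> {1..n} \<Longrightarrow>
      holds \<sigma> k (D i) \<longleftrightarrow> (Q i \<in> \<sigma> ! k \<longleftrightarrow> Q i \<in> \<tau>)"
  proof -
    fix k i assume k: "k < length \<sigma>" "j \<le> k" "i \<in> {1..n}"
    have o: "\<And>\<psi>. (\<exists>j'\<le>k. Pt \<in> \<sigma> ! j' \<and> \<psi> (\<sigma> ! j')) \<longleftrightarrow> \<psi> (bar n \<tau>)"
      using c k sj bar_mem(1)[of n \<tau>] by (metis le_less_trans)
    show "holds \<sigma> k (D i) \<longleftrightarrow> (Q i \<in> \<sigma> ! k \<longleftrightarrow> Q i \<in> \<tau>)"
      unfolding D_def using o[of "\<lambda>x. P i \<in> x"] o[of "\<lambda>x. P i \<notin> x"] bar_mem(3)[of i n \<tau>] k(3)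
      by auto
  qed
  have phi: "Phi n = Fut (And (Pos Qt) (conj_list (map D [1..<n+1])))"
    unfolding Phi_def D_def by simp
  have ne: "map D [1..<n+1] \<noteq> []" using n by simp
  have models_iff: "models \<sigma> (Phi n) \<longleftrightarrow>
     (\<exists>k<length \<sigma>. Qt \<in> \<sigma> ! k \<and> (\<forall>i\<in>{1..n}. holds \<sigma> k (D i)))"
  proof -
    have st: "set (map D [1..<n+1]) = D ` {1..n}" by auto
    have "\<And>k. holds \<sigma> k (conj_list (map D [1..<n+1])) \<longleftrightarrow> (\<forall>i\<in>{1..n}. holds \<sigma> k (D i))"
      using holds_conj_list[OF ne] unfolding st by simp
    moreover have "\<sigma> \<noteq> []" using len by auto
    ultimately show ?thesis unfolding models_def phi by auto
  qed
  show ?thesis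
  proof
    assume "models (replicate j {} @ [bar n \<tau>] @ blocks n M) (Phi n)"
    then obtain k where k: "k < length \<sigma>" "Qt \<in> \<sigma> ! k" "\<forall>i\<in>{1..n}. holds \<sigma> k (D i)"
      using models_iff \<sigma>_def by auto
    have km: "\<sigma> ! k \<in> set M" "j < k" using d k by auto
    have agree: "\<forall>i\<in>{1..n}. Q i \<in> \<sigma> ! k \<longleftrightarrow> Q i \<in> \<tau>" using f k km by auto
    have "\<sigma> ! k \<in> T_Q n" using km M by auto
    then have "\<sigma> ! k = \<tau>" using tau agree unfolding T_Q_def by auto
    then show "\<tau> \<in> set M" using km by simp
  next
    assume "\<tau> \<in> set M"
    then have "\<tau> \<in> set (blocks n M)" unfolding blocks_def by auto
    then obtain idx where idx: "idx < length (blocks n M)" "blocks n M ! idx = \<tau>"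
      by (auto simp: in_set_conv_nth)
    define k where "k = j + 1 + idx"
    have k: "k < length \<sigma>" "j \<le> k" "\<sigma> ! k = \<tau>" using idx nth len unfolding k_def by auto
    have "Qt \<in> \<sigma> ! k" using k tau unfolding T_Q_def by auto
    moreover have "\<forall>i\<in>{1..n}. holds \<sigma> k (D i)" using f k by auto
    ultimately show "models (replicate j {} @ [bar n \<tau>] @ blocks n M) (Phi n)"
      using models_iff k \<sigma>_def by auto
  qed
qed

theorem lemma3:
  fixes n :: nat and ord :: "letter \<Rightarrow> letter \<Rightarrow> bool"
  assumes "n \<ge> 1"
    and "strict_total_on (T_Q n) ord"
  shows "(\<forall>\<sigma>\<in>A_set n ord. models \<sigma> (Phi n)) \<and> (\<forall>\<sigma>\<in>B_set n ord. \<not> models \<sigma> (Phi n))"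
proof -
  have E: "distinct (enum_list n ord)" "set (enum_list n ord) = T_Q n"
    using enum_props[OF assms(2)] by auto
  have sub: "set (remove1 \<tau> (enum_list n ord)) \<subseteq> T_Q n" for \<tau>
    using E set_remove1_subset by fastforce
  show ?thesis
  proof (intro conjI ballI)
    fix \<sigma> assume "\<sigma> \<in> A_set n ord"
    then obtain j \<tau> where "\<sigma> = replicate j {} @ [bar n \<tau>] @ Enum n ord" "\<tau> \<in> T_Q n"
      unfolding A_set_def by auto
    then show "models \<sigma> (Phi n)" using key[of "enum_list n ord" n \<tau> j] E assms(1)
      unfolding Enum_def by auto
  next
    fix \<sigma> assume "\<sigma> \<in> B_set n ord"
    then obtain j \<tau> where "\<sigma> = replicate j {} @ [bar n \<tau>] @ Enum_minus n ord \<tau>" "\<tau> \<in> T_Q n"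
      unfolding B_set_def by auto
    then show "\<not> models \<sigma> (Phi n)" using key[OF sub, of \<tau> j] E assms(1)
      unfolding Enum_minus_def by auto
  qed
qed

end
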